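(* Let $G$ be a permutation group and $K$ a field with a $G$-action. Assume that for every open subgroup $U\subset G$ there is an open subgroup $U'\subset U$ such that for every $g\in G$ the subgroup $gU'g^{-1}\cap U$ has infinite index in $U$. Then $\mathrm{Sm}_K(G)$ has no non-zero projective objects.
   Context: A permutation group is a Hausdorff topological group admitting a base of open sets consisting of left and right translates of subgroups. $\mathrm{Sm}_K(G)$ is the category of smooth left modules over the skew group ring $K\langle G\rangle$ ($(a[g])(b[h])=ab^g[gh]$), smooth meaning every element has an open stabilizer. *)

theory Defs
  imports "HOL-Algebra.Coset" "HOL-Analysis.Analysis"
begin

definition topological_group :: "'g monoid \<Rightarrow> 'g topology \<Rightarrow> bool" where
  "topological_group G T \<longleftrightarrow> group G \<and> topspace T = carrier G
     \<and> continuous_map (prod_topology T T) T (\<lambda>(x, y). x \<otimes>\<^bsub>G\<^esub> y)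
     \<and> continuous_map T T (\<lambda>x. inv\<^bsub>G\<^esub> x)"

definition permutation_group :: "'g monoid \<Rightarrow> 'g topology \<Rightarrow> bool" where
  "permutation_group G T \<longleftrightarrow> topological_group G T \<and> Hausdorff_space T
     \<and> (\<exists>\<B>. (\<forall>B\<in>\<B>. openin T B \<and>
                  (\<exists>H g. subgroup H G \<and> g \<in> carrier G \<and>
                         (B = l_coset G g H \<or> B = r_coset G H g)))
          \<and> (\<forall>W x. openin T W \<and> x \<in> W \<longrightarrow> (\<exists>B\<in>\<B>. x \<in> B \<and> B \<subseteq> W)))"

definition open_subgroup :: "'g monoid \<Rightarrow> 'g topology \<Rightarrow> 'g set \<Rightarrow> bool" where
  "open_subgroup G T U \<longleftrightarrow> subgroup U G \<and> openin T U"

definition conj_set :: "'g monoid \<Rightarrow> 'g \<Rightarrow> 'g set \<Rightarrow> 'g set" where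
  "conj_set G g U = {g \<otimes>\<^bsub>G\<^esub> u \<otimes>\<^bsub>G\<^esub> inv\<^bsub>G\<^esub> g | u. u \<in> U}"

definition infinite_index :: "'g monoid \<Rightarrow> 'g set \<Rightarrow> 'g set \<Rightarrow> bool" where
  "infinite_index G H U \<longleftrightarrow> infinite {l_coset G u H | u. u \<in> U}"

definition field_action :: "'g monoid \<Rightarrow> ('g \<Rightarrow> 'k::field \<Rightarrow> 'k) \<Rightarrow> bool" where
  "field_action G \<sigma> \<longleftrightarrow>
     (\<forall>g\<in>carrier G. bij (\<sigma> g) \<and> (\<forall>a b. \<sigma> g (a + b) = \<sigma> g a + \<sigma> g b)
                     \<and> (\<forall>a b. \<sigma> g (a * b) = \<sigma> g a * \<sigma> g b) \<and> \<sigma> g 1 = 1)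
   \<and> (\<forall>a. \<sigma> \<one>\<^bsub>G\<^esub> a = a)
   \<and> (\<forall>g\<in>carrier G. \<forall>h\<in>carrier G. \<forall>a. \<sigma> (g \<otimes>\<^bsub>G\<^esub> h) a = \<sigma> g (\<sigma> h a))"

text \<open>A left K<G>-module, with (a[g])(b[h]) = a b^g [gh], is the same as a K-vector space
 V with an action of G by additive maps which are semilinear: g(a v) = a^g (g v).\<close>

record ('k, 'g, 'v) skew_module =
  vcarr :: "'v set"
  vzero :: 'v
  vadd :: "'v \<Rightarrow> 'v \<Rightarrow> 'v"
  vsmul :: "'k \<Rightarrow> 'v \<Rightarrow> 'v"
  vact :: "'g \<Rightarrow> 'v \<Rightarrow> 'v"

definition skew_group_module ::
  "'g monoid \<Rightarrow> ('g \<Rightarrow> 'k::field \<Rightarrow> 'k) \<Rightarrow> ('k, 'g, 'v) skew_module \<Rightarrow> bool" where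
  "skew_group_module G \<sigma> M \<longleftrightarrow>
     (let V = vcarr M; z = vzero M; ad = vadd M; sm = vsmul M; ac = vact M in
       z \<in> V
     \<and> (\<forall>x\<in>V. \<forall>y\<in>V. ad x y \<in> V)
     \<and> (\<forall>a. \<forall>x\<in>V. sm a x \<in> V)
     \<and> (\<forall>g\<in>carrier G. \<forall>x\<in>V. ac g x \<in> V)
     \<and> (\<forall>x\<in>V. \<forall>y\<in>V. \<forall>w\<in>V. ad (ad x y) w = ad x (ad y w))
     \<and> (\<forall>x\<in>V. \<forall>y\<in>V. ad x y = ad y x)
     \<and> (\<forall>x\<in>V. ad z x = x)
     \<and> (\<forall>x\<in>V. \<exists>y\<in>V. ad x y = z)
     \<and> (\<forall>a. \<forall>x\<in>V. \<forall>y\<in>V. sm a (ad x y) = ad (sm a x) (sm a y))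
     \<and> (\<forall>a b. \<forall>x\<in>V. sm (a + b) x = ad (sm a x) (sm b x))
     \<and> (\<forall>a b. \<forall>x\<in>V. sm (a * b) x = sm a (sm b x))
     \<and> (\<forall>x\<in>V. sm 1 x = x)
     \<and> (\<forall>g\<in>carrier G. \<forall>x\<in>V. \<forall>y\<in>V. ac g (ad x y) = ad (ac g x) (ac g y))
     \<and> (\<forall>g\<in>carrier G. \<forall>a. \<forall>x\<in>V. ac g (sm a x) = sm (\<sigma> g a) (ac g x))
     \<and> (\<forall>x\<in>V. ac \<one>\<^bsub>G\<^esub> x = x)
     \<and> (\<forall>g\<in>carrier G. \<forall>h\<in>carrier G. \<forall>x\<in>V. ac (g \<otimes>\<^bsub>G\<^esub> h) x = ac g (ac h x)))"

definition smooth_module ::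
  "'g monoid \<Rightarrow> 'g topology \<Rightarrow> ('g \<Rightarrow> 'k::field \<Rightarrow> 'k) \<Rightarrow> ('k, 'g, 'v) skew_module \<Rightarrow> bool" where
  "smooth_module G T \<sigma> M \<longleftrightarrow> skew_group_module G \<sigma> M
     \<and> (\<forall>x\<in>vcarr M. openin T {g \<in> carrier G. vact M g x = x})"

definition skew_hom ::
  "'g monoid \<Rightarrow> ('k::field, 'g, 'v) skew_module \<Rightarrow> ('k, 'g, 'w) skew_module \<Rightarrow> ('v \<Rightarrow> 'w) \<Rightarrow> bool" where
  "skew_hom G M N f \<longleftrightarrow>
     (\<forall>x\<in>vcarr M. f x \<in> vcarr N)
   \<and> (\<forall>x\<in>vcarr M. \<forall>y\<in>vcarr M. f (vadd M x y) = vadd N (f x) (f y))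
   \<and> (\<forall>a. \<forall>x\<in>vcarr M. f (vsmul M a x) = vsmul N a (f x))
   \<and> (\<forall>g\<in>carrier G. \<forall>x\<in>vcarr M. f (vact M g x) = vact N g (f x))"

text \<open>Projective object of Sm_K(G), tested against all epimorphisms (= surjective morphisms)
 between smooth modules whose underlying sets live in the type 'u.\<close>
definition sm_projective_in ::
  "'u itself \<Rightarrow> 'g monoid \<Rightarrow> 'g topology \<Rightarrow> ('g \<Rightarrow> 'k::field \<Rightarrow> 'k)
     \<Rightarrow> ('k, 'g, 'v) skew_module \<Rightarrow> bool" where
  "sm_projective_in (TYPE('u)) G T \<sigma> P \<longleftrightarrow>
     (\<forall>(M :: ('k, 'g, 'u) skew_module) (N :: ('k, 'g, 'u) skew_module) f h.
        smooth_module G T \<sigma> M \<and> smooth_module G T \<sigma> N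
        \<and> skew_hom G M N f \<and> f ` vcarr M = vcarr N \<and> skew_hom G P N h
        \<longrightarrow> (\<exists>l. skew_hom G P M l \<and> (\<forall>x\<in>vcarr P. f (l x) = h x)))"

text \<open>Projective in Sm_K(G); test objects are modules on the universe type
 ('v \<times> 'g set \<Rightarrow> 'k), which is large enough to contain (copies of) P, all
 permutation modules K[G/U] and direct sums of them indexed by elements of P.\<close>
abbreviation sm_projective ::
  "'g monoid \<Rightarrow> 'g topology \<Rightarrow> ('g \<Rightarrow> 'k::field \<Rightarrow> 'k) \<Rightarrow> ('k, 'g, 'v) skew_module \<Rightarrow> bool" where
  "sm_projective G T \<sigma> P \<equiv> sm_projective_in TYPE('v \<times> 'g set \<Rightarrow> 'k) G T \<sigma> P"

end

theory Submission imports Defs "HOL-Algebra.FiniteProduct" begin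

lemma tg_group: "topological_group G T \<Longrightarrow> group G"
  by (simp add: topological_group_def)

lemma tg_left:
  assumes "topological_group G T" "a \<in> carrier G"
  shows "continuous_map T T (\<lambda>z. a \<otimes>\<^bsub>G\<^esub> z)"
proof -
  have tp: "topspace T = carrier G" and m: "continuous_map (prod_topology T T) T (\<lambda>(x, y). x \<otimes>\<^bsub>G\<^esub> y)"
    using assms by (auto simp: topological_group_def)
  have "continuous_map T (prod_topology T T) (\<lambda>z. (a, z))"
    by (intro continuous_map_pairedI) (auto simp: tp assms)
  from continuous_map_compose[OF this m] show ?thesis by (simp add: o_def)
qed

lemma tg_right:
  assumes "topological_group G T" "a \<in> carrier G"
  shows "continuous_map T T (\<lambda>z. z \<otimes>\<^bsub>G\<^esub> a)"
proof -
  have tp: "topspace T = carrier G" and m: "continuous_map (prod_topology T T) T (\<lambda>(x, y). x \<otimes>\<^bsub>G\<^esub> y)"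
    using assms by (auto simp: topological_group_def)
  have "continuous_map T (prod_topology T T) (\<lambda>z. (z, a))"
    by (intro continuous_map_pairedI) (auto simp: tp assms)
  from continuous_map_compose[OF this m] show ?thesis by (simp add: o_def)
qed

lemma tg_preimage:
  assumes "topological_group G T" "a \<in> carrier G" "b \<in> carrier G" "openin T W"
  shows "openin T {z \<in> carrier G. a \<otimes>\<^bsub>G\<^esub> z \<otimes>\<^bsub>G\<^esub> b \<in> W}"
proof -
  have tp: "topspace T = carrier G" using assms by (auto simp: topological_group_def)
  have "continuous_map T T ((\<lambda>z. z \<otimes>\<^bsub>G\<^esub> b) \<circ> (\<lambda>z. a \<otimes>\<^bsub>G\<^esub> z))"
    by (rule continuous_map_compose[OF tg_left[OF assms(1,2)] tg_right[OF assms(1,3)]])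
  from openin_continuous_map_preimage[OF this assms(4)] show ?thesis by (simp add: tp)
qed

definition addgrp :: "('k, 'g, 'v) skew_module \<Rightarrow> 'v monoid" where
  "addgrp M = \<lparr>carrier = vcarr M, monoid.mult = vadd M, one = vzero M\<rparr>"

definition vsum :: "('k, 'g, 'v) skew_module \<Rightarrow> ('a \<Rightarrow> 'v) \<Rightarrow> 'a set \<Rightarrow> 'v" where
  "vsum M F S = finprod (addgrp M) F S"

locale skm =
  fixes G :: "'g monoid" and \<sigma> :: "'g \<Rightarrow> 'k::field \<Rightarrow> 'k" and M :: "('k, 'g, 'v) skew_module"
  assumes grp: "group G" and fa: "field_action G \<sigma>" and sk: "skew_group_module G \<sigma> M"
begin

abbreviation "V \<equiv> vcarr M"
abbreviation "z \<equiv> vzero M"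
abbreviation "ad \<equiv> vadd M"
abbreviation "sm \<equiv> vsmul M"
abbreviation "ac \<equiv> vact M"

lemmas skf = sk[unfolded skew_group_module_def Let_def]

lemma zero_in: "z \<in> V"
  using skf by auto

lemma add_in: "x \<in> V \<Longrightarrow> y \<in> V \<Longrightarrow> ad x y \<in> V"
  using skf by auto

lemma sm_in: "x \<in> V \<Longrightarrow> sm a x \<in> V"
  using skf by auto

lemma ac_in: "g \<in> carrier G \<Longrightarrow> x \<in> V \<Longrightarrow> ac g x \<in> V"
  using skf by auto

lemma add_assoc: "x \<in> V \<Longrightarrow> y \<in> V \<Longrightarrow> w \<in> V \<Longrightarrow> ad (ad x y) w = ad x (ad y w)"
  using skf by auto

lemma add_comm: "x \<in> V \<Longrightarrow> y \<in> V \<Longrightarrow> ad x y = ad y x"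
  using skf by auto

lemma add_zero: "x \<in> V \<Longrightarrow> ad z x = x"
  using skf by auto

lemma add_inv: "x \<in> V \<Longrightarrow> \<exists>y\<in>V. ad x y = z"
  using skf by meson

lemma sm_add: "x \<in> V \<Longrightarrow> y \<in> V \<Longrightarrow> sm a (ad x y) = ad (sm a x) (sm a y)"
  using skf by auto

lemma add_sm: "x \<in> V \<Longrightarrow> sm (a + b) x = ad (sm a x) (sm b x)"
  using skf by auto

lemma mult_sm: "x \<in> V \<Longrightarrow> sm (a * b) x = sm a (sm b x)"
  using skf by auto

lemma one_sm: "x \<in> V \<Longrightarrow> sm 1 x = x"
  using skf by auto

lemma ac_add: "g \<in> carrier G \<Longrightarrow> x \<in> V \<Longrightarrow> y \<in> V \<Longrightarrow> ac g (ad x y) = ad (ac g x) (ac g y)"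
  using skf by auto

lemma ac_sm: "g \<in> carrier G \<Longrightarrow> x \<in> V \<Longrightarrow> ac g (sm a x) = sm (\<sigma> g a) (ac g x)"
  using skf by auto

lemma ac_one: "x \<in> V \<Longrightarrow> ac \<one>\<^bsub>G\<^esub> x = x"
  using skf by auto

lemma ac_mult: "g \<in> carrier G \<Longrightarrow> h \<in> carrier G \<Longrightarrow> x \<in> V \<Longrightarrow> ac (g \<otimes>\<^bsub>G\<^esub> h) x = ac g (ac h x)"
  using skf by auto

lemma cg: "comm_group (addgrp M)"
  unfolding addgrp_def
  apply (rule comm_groupI)
  using zero_in add_in add_assoc add_comm add_zero apply auto
  by (metis add_comm add_inv)

interpretation A: comm_group "addgrp M" by (rule cg)

lemma A_simps[simp]: "carrier (addgrp M) = V" "monoid.mult (addgrp M) = ad" "one (addgrp M) = z"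
  by (simp_all add: addgrp_def)

lemma add_zero_r: "x \<in> V \<Longrightarrow> ad x z = x"
  using add_comm add_zero zero_in by metis

lemma add_cancel: "x \<in> V \<Longrightarrow> y \<in> V \<Longrightarrow> ad x y = x \<Longrightarrow> y = z"
  using A.l_cancel_one[of x y] by simp

lemma sm_zero: "sm a z = z"
proof -
  have "ad (sm a z) (sm a z) = sm a z"
    using sm_add[of z z a] zero_in add_zero by simp
  then show ?thesis using add_cancel sm_in zero_in by blast
qed

lemma zero_sm: "x \<in> V \<Longrightarrow> sm 0 x = z"
proof -
  assume x: "x \<in> V"
  have "ad (sm 0 x) (sm 0 x) = sm 0 x"
    using add_sm[of x 0 0] x by simp
  then show ?thesis using add_cancel sm_in x by blast
qed

lemma ac_zero: "g \<in> carrier G \<Longrightarrow> ac g z = z"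
proof -
  assume g: "g \<in> carrier G"
  have "ad (ac g z) (ac g z) = ac g z"
    using ac_add[OF g zero_in zero_in] add_zero[OF zero_in] by simp
  then show ?thesis using add_cancel ac_in g zero_in by blast
qed

lemma sm_eq_zero: "x \<in> V \<Longrightarrow> sm a x = z \<Longrightarrow> a \<noteq> 0 \<Longrightarrow> x = z"
  by (metis mult_sm one_sm sm_zero field_class.field_inverse)

lemma sm_inj: "x \<in> V \<Longrightarrow> x \<noteq> z \<Longrightarrow> sm a x = sm b x \<Longrightarrow> a = b"
proof -
  assume x: "x \<in> V" "x \<noteq> z" "sm a x = sm b x"
  have "sm (a - b) x = ad (sm a x) (sm (- b) x)" using add_sm[OF x(1), of a "-b"] by simp
  also have "\<dots> = ad (sm b x) (sm (- b) x)" using x by simp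
  also have "\<dots> = sm (b + - b) x" using add_sm[OF x(1), of b "-b"] by simp
  also have "\<dots> = z" using zero_sm x by simp
  finally have "a - b = 0" using sm_eq_zero x by blast
  then show ?thesis by simp
qed

lemma vsum_closed: "(\<And>x. x \<in> S \<Longrightarrow> F x \<in> V) \<Longrightarrow> vsum M F S \<in> V"
  unfolding vsum_def using A.finprod_closed[of F S] by auto

lemma vsum_add: "(\<And>x. x \<in> S \<Longrightarrow> F x \<in> V) \<Longrightarrow> (\<And>x. x \<in> S \<Longrightarrow> F' x \<in> V) \<Longrightarrow>
   vsum M (\<lambda>x. ad (F x) (F' x)) S = ad (vsum M F S) (vsum M F' S)"
  unfolding vsum_def using A.finprod_multf[of F S F'] by auto

lemma vsum_empty[simp]: "vsum M F {} = z"
  unfolding vsum_def by simp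

lemma vsum_hom:
  assumes "\<And>x. x \<in> V \<Longrightarrow> \<phi> x \<in> V" "\<And>x y. x \<in> V \<Longrightarrow> y \<in> V \<Longrightarrow> \<phi> (ad x y) = ad (\<phi> x) (\<phi> y)"
    "\<phi> z = z" "\<And>x. x \<in> S \<Longrightarrow> F x \<in> V"
  shows "\<phi> (vsum M F S) = vsum M (\<lambda>x. \<phi> (F x)) S"
proof (cases "finite S")
  case True
  then show ?thesis using assms(4)
  proof (induct S rule: finite_induct)
    case empty
    then show ?case using assms(3) by simp
  next
    case (insert a S)
    have "vsum M F (insert a S) = ad (F a) (vsum M F S)"
      unfolding vsum_def using insert by (subst A.finprod_insert) auto
    moreover have "vsum M (\<lambda>x. \<phi> (F x)) (insert a S) = ad (\<phi> (F a)) (vsum M (\<lambda>x. \<phi> (F x)) S)"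
      unfolding vsum_def using insert assms(1) by (subst A.finprod_insert) auto
    ultimately show ?case using insert assms(2)[of "F a" "vsum M F S"] vsum_closed[of S F] by simp
  qed
next
  case False
  then show ?thesis using assms(3) by (simp add: vsum_def)
qed

lemma vsum_neutral:
  assumes "finite B" "S \<subseteq> B" "\<And>i. i \<in> B - S \<Longrightarrow> F i = z" "\<And>i. i \<in> B \<Longrightarrow> F i \<in> V"
  shows "vsum M F S = vsum M F B"
  unfolding vsum_def using assms
  by (intro A.finprod_mono_neutral_cong_left) auto

lemma vsum_reindex:
  assumes "inj_on h S" "\<And>i. i \<in> h ` S \<Longrightarrow> F i \<in> V"
  shows "vsum M F (h ` S) = vsum M (\<lambda>x. F (h x)) S"
  unfolding vsum_def using assms by (intro A.finprod_reindex) auto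

lemma stab_subgroup: "x \<in> V \<Longrightarrow> subgroup {g \<in> carrier G. ac g x = x} G"
proof -
  assume x: "x \<in> V"
  interpret G: group G by (rule grp)
  show ?thesis
  proof (rule G.subgroupI)
    show "{g \<in> carrier G. ac g x = x} \<noteq> {}" using ac_one x by auto
    fix a assume a: "a \<in> {g \<in> carrier G. ac g x = x}"
    then have "ac (inv\<^bsub>G\<^esub> a) x = ac (inv\<^bsub>G\<^esub> a) (ac a x)" by simp
    also have "\<dots> = x" using ac_mult[of "inv\<^bsub>G\<^esub> a" a x] a x ac_one by simp
    finally show "inv\<^bsub>G\<^esub> a \<in> {g \<in> carrier G. ac g x = x}" using a by simp
  next
    fix a b assume "a \<in> {g \<in> carrier G. ac g x = x}" "b \<in> {g \<in> carrier G. ac g x = x}"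
    then show "a \<otimes>\<^bsub>G\<^esub> b \<in> {g \<in> carrier G. ac g x = x}" using ac_mult x by simp
  qed auto
qed

lemma vsum_cong: "(\<And>x. x \<in> S \<Longrightarrow> F x = F' x) \<Longrightarrow> (\<And>x. x \<in> S \<Longrightarrow> F' x \<in> V) \<Longrightarrow>
   vsum M F S = vsum M F' S"
  unfolding vsum_def by (intro A.finprod_cong') auto

lemma vsum_single: "F a \<in> V \<Longrightarrow> vsum M F {a} = F a"
  unfolding vsum_def by (simp add: add_zero_r)

end


definition Cos :: "'g monoid \<Rightarrow> 'g set \<Rightarrow> 'g set set" where
  "Cos G U' = {l_coset G x U' | x. x \<in> carrier G}"

definition Xs :: "'g monoid \<Rightarrow> ('k, 'g, 'v) skew_module \<Rightarrow> 'g set \<Rightarrow> ('v \<times> 'g set) set" where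
  "Xs G P U' = vcarr P \<times> Cos G U'"

definition actX :: "'g monoid \<Rightarrow> ('k, 'g, 'v) skew_module \<Rightarrow> 'g \<Rightarrow> 'v \<times> 'g set \<Rightarrow> 'v \<times> 'g set" where
  "actX G P g p = (vact P g (fst p), l_coset G g (snd p))"

definition freeM :: "'g monoid \<Rightarrow> ('g \<Rightarrow> 'k::field \<Rightarrow> 'k) \<Rightarrow> ('k, 'g, 'v) skew_module \<Rightarrow> 'g set
   \<Rightarrow> ('k, 'g, 'v \<times> 'g set \<Rightarrow> 'k) skew_module" where
  "freeM G \<sigma> P U' = \<lparr>vcarr = {F. finite {p. F p \<noteq> 0} \<and> {p. F p \<noteq> 0} \<subseteq> Xs G P U'},
     vzero = (\<lambda>p. 0), vadd = (\<lambda>F F' p. F p + F' p), vsmul = (\<lambda>a F p. a * F p),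
     vact = (\<lambda>g F p. if p \<in> Xs G P U' then \<sigma> g (F (actX G P (inv\<^bsub>G\<^esub> g) p)) else 0)\<rparr>"

definition emb :: "'v \<Rightarrow> ('v \<times> 'g set \<Rightarrow> 'k::field)" where
  "emb y = (\<lambda>p. if p = (y, {}) then 1 else 0)"

lemma inj_emb: "inj (emb :: 'v \<Rightarrow> 'v \<times> 'g set \<Rightarrow> 'k::field)"
proof (rule injI)
  fix x y :: 'v
  assume H: "(emb x :: 'v \<times> 'g set \<Rightarrow> 'k) = emb y"
  have "(emb x :: 'v \<times> 'g set \<Rightarrow> 'k) (x, {}) = 1" by (simp add: emb_def)
  then have "(emb y :: 'v \<times> 'g set \<Rightarrow> 'k) (x, {}) = 1" using H by simp
  then show "x = y" by (simp add: emb_def split: if_splits)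
qed

lemma emb_eq[simp]: "((emb a :: 'v \<times> 'g set \<Rightarrow> 'k::field) = emb b) = (a = b)"
  using inj_emb injD by metis

definition dec :: "('v \<times> 'g set \<Rightarrow> 'k::field) \<Rightarrow> 'v" where
  "dec = inv_into UNIV emb"

lemma dec_emb[simp]: "dec (emb y) = y"
  by (simp add: dec_def inj_emb inv_into_f_f)

definition copyN :: "('k::field, 'g, 'v) skew_module \<Rightarrow> ('k, 'g, 'v \<times> 'g set \<Rightarrow> 'k) skew_module" where
  "copyN P = \<lparr>vcarr = emb ` vcarr P, vzero = emb (vzero P),
     vadd = (\<lambda>a b. emb (vadd P (dec a) (dec b))), vsmul = (\<lambda>c a. emb (vsmul P c (dec a))),
     vact = (\<lambda>g a. emb (vact P g (dec a)))\<rparr>"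

definition fmap :: "('k::field, 'g, 'v) skew_module \<Rightarrow> ('v \<times> 'g set \<Rightarrow> 'k) \<Rightarrow> ('v \<times> 'g set \<Rightarrow> 'k)" where
  "fmap P F = emb (vsum P (\<lambda>p. vsmul P (F p) (fst p)) {p. F p \<noteq> 0})"

locale constr =
  fixes G :: "'g monoid" and T :: "'g topology" and \<sigma> :: "'g \<Rightarrow> 'k::field \<Rightarrow> 'k"
    and P :: "('k, 'g, 'v) skew_module" and v :: 'v and U' :: "'g set"
  assumes tg: "topological_group G T" and fa: "field_action G \<sigma>"
    and smP: "smooth_module G T \<sigma> P" and v: "v \<in> vcarr P" and vnz: "v \<noteq> vzero P"
    and U'sub: "subgroup U' G" and U'open: "openin T U'"
    and U'U: "U' \<subseteq> {g \<in> carrier G. vact P g v = v}"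
    and infi: "\<forall>g\<in>carrier G. infinite_index G (conj_set G g U' \<inter> {g \<in> carrier G. vact P g v = v})
                   {g \<in> carrier G. vact P g v = v}"
begin

lemma grp: "group G" using tg by (simp add: topological_group_def)

interpretation G: group G by (rule grp)

lemma skP: "skew_group_module G \<sigma> P" using smP by (simp add: smooth_module_def)

interpretation P: skm G \<sigma> P by (rule skm.intro[OF grp fa skP])

abbreviation "Us \<equiv> {g \<in> carrier G. vact P g v = v}"
abbreviation "X \<equiv> Xs G P U'"
abbreviation "M \<equiv> freeM G \<sigma> P U'"
abbreviation "N \<equiv> copyN P"

lemma sig_add: "g \<in> carrier G \<Longrightarrow> \<sigma> g (a + b) = \<sigma> g a + \<sigma> g b"
  and sig_mult: "g \<in> carrier G \<Longrightarrow> \<sigma> g (a * b) = \<sigma> g a * \<sigma> g b"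
  and sig_bij: "g \<in> carrier G \<Longrightarrow> bij (\<sigma> g)"
  and sig_one: "\<sigma> \<one>\<^bsub>G\<^esub> a = a"
  and sig_comp: "g \<in> carrier G \<Longrightarrow> h \<in> carrier G \<Longrightarrow> \<sigma> (g \<otimes>\<^bsub>G\<^esub> h) a = \<sigma> g (\<sigma> h a)"
  using fa unfolding field_action_def by auto

lemma sig_zero: "g \<in> carrier G \<Longrightarrow> \<sigma> g 0 = 0"
  using sig_add[of g 0 0] by (metis add_0 add_cancel_right_right)

lemma sig_nz: "g \<in> carrier G \<Longrightarrow> a \<noteq> 0 \<Longrightarrow> \<sigma> g a \<noteq> 0"
  using sig_bij sig_zero by (metis bij_pointE)

lemma U'c: "U' \<subseteq> carrier G" using U'sub subgroup.subset by blast

lemma Cos_sub: "C \<in> Cos G U' \<Longrightarrow> C \<subseteq> carrier G"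
  unfolding Cos_def using G.l_coset_subset_G U'c by blast

lemma Cos_act: "g \<in> carrier G \<Longrightarrow> C \<in> Cos G U' \<Longrightarrow> l_coset G g C \<in> Cos G U'"
  unfolding Cos_def using G.lcos_m_assoc U'c by fastforce

lemma Cos_comp: "g \<in> carrier G \<Longrightarrow> h \<in> carrier G \<Longrightarrow> C \<in> Cos G U' \<Longrightarrow>
   l_coset G g (l_coset G h C) = l_coset G (g \<otimes>\<^bsub>G\<^esub> h) C"
  using G.lcos_m_assoc Cos_sub by blast

lemma Cos_one: "C \<in> Cos G U' \<Longrightarrow> l_coset G \<one>\<^bsub>G\<^esub> C = C"
  using G.lcos_mult_one Cos_sub by blast

lemma U'_Cos: "U' \<in> Cos G U'"
  unfolding Cos_def using G.lcos_mult_one[OF U'c] by force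

lemma X_act: "g \<in> carrier G \<Longrightarrow> p \<in> X \<Longrightarrow> actX G P g p \<in> X"
  unfolding Xs_def actX_def using P.ac_in Cos_act by (cases p) auto

lemma actX_comp: "g \<in> carrier G \<Longrightarrow> h \<in> carrier G \<Longrightarrow> p \<in> X \<Longrightarrow>
   actX G P g (actX G P h p) = actX G P (g \<otimes>\<^bsub>G\<^esub> h) p"
  unfolding Xs_def actX_def using P.ac_mult Cos_comp by (cases p) auto

lemma actX_one: "p \<in> X \<Longrightarrow> actX G P \<one>\<^bsub>G\<^esub> p = p"
  unfolding Xs_def actX_def using P.ac_one Cos_one by (cases p) auto

lemma actX_inv1: "g \<in> carrier G \<Longrightarrow> p \<in> X \<Longrightarrow> actX G P (inv\<^bsub>G\<^esub> g) (actX G P g p) = p"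
  using actX_comp actX_one by simp

lemma actX_inv2: "g \<in> carrier G \<Longrightarrow> p \<in> X \<Longrightarrow> actX G P g (actX G P (inv\<^bsub>G\<^esub> g) p) = p"
  using actX_comp actX_one by simp

lemma M_simps: "vcarr M = {F. finite {p. F p \<noteq> 0} \<and> {p. F p \<noteq> 0} \<subseteq> X}"
  "vzero M = (\<lambda>p. 0)" "vadd M F F' = (\<lambda>p. F p + F' p)" "vsmul M a F = (\<lambda>p. a * F p)"
  "vact M g F = (\<lambda>p. if p \<in> X then \<sigma> g (F (actX G P (inv\<^bsub>G\<^esub> g) p)) else 0)"
  by (simp_all add: freeM_def)

lemma M_out: "F \<in> vcarr M \<Longrightarrow> p \<notin> X \<Longrightarrow> F p = 0"
  by (auto simp: M_simps)

lemma supp_act: "g \<in> carrier G \<Longrightarrow> F \<in> vcarr M \<Longrightarrow>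
   {p. vact M g F p \<noteq> 0} \<subseteq> actX G P g ` {p. F p \<noteq> 0}"
proof
  fix p assume g: "g \<in> carrier G" and F: "F \<in> vcarr M" and p: "p \<in> {p. vact M g F p \<noteq> 0}"
  then have pX: "p \<in> X" and nz: "\<sigma> g (F (actX G P (inv\<^bsub>G\<^esub> g) p)) \<noteq> 0"
    by (auto simp: M_simps split: if_splits)
  then have "F (actX G P (inv\<^bsub>G\<^esub> g) p) \<noteq> 0" using sig_zero g by auto
  moreover have "p = actX G P g (actX G P (inv\<^bsub>G\<^esub> g) p)" using actX_inv2 g pX by simp
  ultimately show "p \<in> actX G P g ` {p. F p \<noteq> 0}" by blast
qed

lemma M_act_in: "g \<in> carrier G \<Longrightarrow> F \<in> vcarr M \<Longrightarrow> vact M g F \<in> vcarr M"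
proof -
  assume g: "g \<in> carrier G" and F: "F \<in> vcarr M"
  have "{p. vact M g F p \<noteq> 0} \<subseteq> X" by (auto simp: M_simps split: if_splits)
  moreover have "finite (actX G P g ` {p. F p \<noteq> 0})" using F by (simp add: M_simps)
  then have "finite {p. vact M g F p \<noteq> 0}"
    using supp_act[OF g F] finite_subset by blast
  ultimately show ?thesis by (simp add: M_simps)
qed

lemma skM: "skew_group_module G \<sigma> M"
proof -
  have fin_add: "finite {p. F p + F' p \<noteq> 0}" if "finite {p. F p \<noteq> 0}" "finite {p. F' p \<noteq> (0::'k)}" for F F' :: "'v \<times> 'g set \<Rightarrow> 'k"
    by (rule finite_subset[of _ "{p. F p \<noteq> 0} \<union> {p. F' p \<noteq> 0}"]) (use that in auto)
  have fin_sm: "finite {p. a * F p \<noteq> 0}" if "finite {p. F p \<noteq> 0}" for a and F :: "'v \<times> 'g set \<Rightarrow> 'k"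
    by (rule finite_subset[of _ "{p. F p \<noteq> 0}"]) (use that in auto)
  have sub_add: "{p. F p + F' p \<noteq> 0} \<subseteq> X" if "{p. F p \<noteq> 0} \<subseteq> X" "{p. F' p \<noteq> (0::'k)} \<subseteq> X" for F F' :: "'v \<times> 'g set \<Rightarrow> 'k"
    using that by force
  have addc: "vadd M x y \<in> vcarr M" if "x \<in> vcarr M" "y \<in> vcarr M" for x y
    using that fin_add[of x y] sub_add[of x y] by (simp add: M_simps)
  have smc: "vsmul M a x \<in> vcarr M" if "x \<in> vcarr M" for x a
    using that fin_sm[of x a] by (force simp add: M_simps)
  have inv: "\<exists>y\<in>vcarr M. vadd M x y = vzero M" if "x \<in> vcarr M" for x
    by (rule bexI[of _ "\<lambda>p. - x p"]) (use that in \<open>auto simp: M_simps\<close>)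
  have one: "vact M \<one>\<^bsub>G\<^esub> x = x" if "x \<in> vcarr M" for x
    using that actX_one sig_one by (auto simp: M_simps fun_eq_iff)
  have comp: "vact M (g \<otimes>\<^bsub>G\<^esub> h) x = vact M g (vact M h x)"
    if "g \<in> carrier G" "h \<in> carrier G" "x \<in> vcarr M" for g h x
  proof -
    have "vact M (g \<otimes>\<^bsub>G\<^esub> h) x p = vact M g (vact M h x) p" for p
    proof (cases "p \<in> X")
      case True
      have 1: "actX G P (inv\<^bsub>G\<^esub> g) p \<in> X" using X_act True that by simp
      have 2: "actX G P (inv\<^bsub>G\<^esub> h) (actX G P (inv\<^bsub>G\<^esub> g) p) = actX G P (inv\<^bsub>G\<^esub> (g \<otimes>\<^bsub>G\<^esub> h)) p"
        using actX_comp True that G.inv_mult_group by simp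
      show ?thesis using True 1 2 that sig_comp by (simp add: M_simps)
    qed (simp add: M_simps)
    then show ?thesis by auto
  qed
  show ?thesis
    unfolding skew_group_module_def Let_def
    apply (intro conjI)
    using inv one comp M_act_in addc smc
    by (auto simp: M_simps fin_add fin_sm fun_eq_iff algebra_simps sig_add sig_mult sig_zero
        intro: fin_add fin_sm sub_add)
qed


interpretation M: skm G \<sigma> M by (rule skm.intro[OF grp fa skM])

lemma stabP_open: "y \<in> vcarr P \<Longrightarrow> openin T {g \<in> carrier G. vact P g y = y}"
  using smP by (simp add: smooth_module_def)

lemma Us_open: "openin T Us" using stabP_open v by simp

lemma sig_fix:
  assumes w: "w \<in> Us" and h: "vact P w (vsmul P a v) = vsmul P a v"
  shows "\<sigma> w a = a"
proof -
  have "vact P w (vsmul P a v) = vsmul P (\<sigma> w a) v" using P.ac_sm[of w v a] w v by simp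
  then show ?thesis using h P.sm_inj[OF v vnz] by simp
qed

lemma coset_fix:
  assumes x: "x \<in> carrier G" and w: "w \<in> carrier G" and u: "inv\<^bsub>G\<^esub> x \<otimes>\<^bsub>G\<^esub> w \<otimes>\<^bsub>G\<^esub> x \<in> U'"
  shows "l_coset G w (l_coset G x U') = l_coset G x U'"
proof -
  let ?u = "inv\<^bsub>G\<^esub> x \<otimes>\<^bsub>G\<^esub> w \<otimes>\<^bsub>G\<^esub> x"
  have uc: "?u \<in> carrier G" using x w by simp
  have e: "w \<otimes>\<^bsub>G\<^esub> x = x \<otimes>\<^bsub>G\<^esub> ?u" using x w by (simp add: G.m_assoc[symmetric])
  have "?u \<in> l_coset G \<one>\<^bsub>G\<^esub> U'" using u G.lcos_mult_one[OF U'c] by simp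
  then have "l_coset G \<one>\<^bsub>G\<^esub> U' = l_coset G ?u U'"
    using G.l_repr_independence[of ?u "\<one>\<^bsub>G\<^esub>" U'] U'sub by simp
  then have uU: "l_coset G ?u U' = U'" using G.lcos_mult_one[OF U'c] by simp
  have "l_coset G w (l_coset G x U') = l_coset G (w \<otimes>\<^bsub>G\<^esub> x) U'"
    using G.lcos_m_assoc U'c x w by blast
  also have "\<dots> = l_coset G x (l_coset G ?u U')"
    using e G.lcos_m_assoc U'c x uc by simp
  finally show ?thesis using uU by simp
qed

lemma key_fix:
  assumes F: "F \<in> vcarr M" and w: "w \<in> carrier G"
    and fx: "\<And>p. F p \<noteq> 0 \<Longrightarrow> actX G P w p = p \<and> \<sigma> w (F p) = F p"
  shows "vact M w F = F"
proof
  fix p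
  show "vact M w F p = F p"
  proof (cases "p \<in> X")
    case False
    then show ?thesis using M_out[OF F False] by (simp add: M_simps)
  next
    case True
    let ?q = "actX G P (inv\<^bsub>G\<^esub> w) p"
    have bk: "actX G P w ?q = p" using actX_inv2 w True by simp
    show ?thesis
    proof (cases "F ?q = 0")
      case False
      then have "actX G P w ?q = ?q" "\<sigma> w (F ?q) = F ?q" using fx by blast+
      then show ?thesis using True bk by (simp add: M_simps)
    next
      case z: True
      have "F p = 0"
      proof (rule ccontr)
        assume "F p \<noteq> 0"
        then have "actX G P w p = p" using fx by blast
        then have "?q = p" using actX_inv1[OF w True] by simp
        then show False using z \<open>F p \<noteq> 0\<close> by simp
      qed
      then show ?thesis using True z sig_zero w by (simp add: M_simps)
    qed
  qed
qed

definition rep :: "'g set \<Rightarrow> 'g" where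
  "rep C = (SOME x. x \<in> carrier G \<and> C = l_coset G x U')"

lemma rep: "C \<in> Cos G U' \<Longrightarrow> rep C \<in> carrier G \<and> C = l_coset G (rep C) U'"
  unfolding rep_def Cos_def by (rule someI_ex) blast

lemma smM: "F \<in> vcarr M \<Longrightarrow> openin T {g \<in> carrier G. vact M g F = F}"
proof -
  assume F: "F \<in> vcarr M"
  have tp: "topspace T = carrier G" using tg by (simp add: topological_group_def)
  define S where "S p = {h \<in> carrier G. vact P h (fst p) = fst p}
     \<inter> {h \<in> carrier G. inv\<^bsub>G\<^esub> (rep (snd p)) \<otimes>\<^bsub>G\<^esub> h \<otimes>\<^bsub>G\<^esub> rep (snd p) \<in> U'}
     \<inter> {h \<in> carrier G. vact P h (vsmul P (F p) v) = vsmul P (F p) v} \<inter> Us" for p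
  define W where "W = (\<Inter>p\<in>{p. F p \<noteq> 0}. S p) \<inter> topspace T"
  have suppX: "p \<in> X" if "F p \<noteq> 0" for p using F that by (auto simp: M_simps)
  have pX: "fst p \<in> vcarr P \<and> snd p \<in> Cos G U'" if "F p \<noteq> 0" for p
    using suppX[OF that] by (cases p) (simp add: Xs_def)
  have openW: "openin T W"
    unfolding W_def
  proof (rule openin_INT)
    show "finite {p. F p \<noteq> 0}" using F by (simp add: M_simps)
    fix p assume "p \<in> {p. F p \<noteq> 0}"
    then have p: "fst p \<in> vcarr P" "snd p \<in> Cos G U'" using pX by auto
    have r: "rep (snd p) \<in> carrier G" using rep[OF p(2)] by simp
    show "openin T (S p)" unfolding S_def
      by (intro openin_Int stabP_open Us_open P.sm_in v p(1) tg_preimage[OF tg _ r U'open]) (use r in simp)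
  qed
  have oneW: "\<one>\<^bsub>G\<^esub> \<in> W"
  proof -
    have "\<one>\<^bsub>G\<^esub> \<in> S p" if "F p \<noteq> 0" for p
    proof -
      have p: "fst p \<in> vcarr P" "snd p \<in> Cos G U'" using pX that by auto
      have r: "rep (snd p) \<in> carrier G" using rep[OF p(2)] by simp
      show ?thesis unfolding S_def
        using p r P.ac_one P.sm_in v subgroup.one_closed[OF U'sub] by simp
    qed
    then show ?thesis unfolding W_def tp by auto
  qed
  have fixW: "vact M w F = F" if "w \<in> W" for w
  proof (rule key_fix[OF F])
    show wc: "w \<in> carrier G" using that by (simp add: W_def tp)
    fix p assume nz: "F p \<noteq> 0"
    have "w \<in> (\<Inter>p\<in>{p. F p \<noteq> 0}. S p)" using that by (simp add: W_def)
    then have wS: "w \<in> S p" using nz by blast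
    have p: "fst p \<in> vcarr P" "snd p \<in> Cos G U'" using pX nz by auto
    have r: "rep (snd p) \<in> carrier G" "snd p = l_coset G (rep (snd p)) U'" using rep[OF p(2)] by auto
    have "l_coset G w (snd p) = snd p"
      using coset_fix[OF r(1) wc] wS r(2) by (simp add: S_def)
    moreover have "vact P w (fst p) = fst p" using wS by (simp add: S_def)
    ultimately have "actX G P w p = p" by (simp add: actX_def)
    moreover have "\<sigma> w (F p) = F p" using sig_fix wS by (simp add: S_def)
    ultimately show "actX G P w p = p \<and> \<sigma> w (F p) = F p" by simp
  qed
  show ?thesis
  proof (subst openin_subopen, intro ballI)
    fix g assume g: "g \<in> {g \<in> carrier G. vact M g F = F}"
    then have gc: "g \<in> carrier G" by simp
    define Tg where "Tg = {h \<in> carrier G. inv\<^bsub>G\<^esub> g \<otimes>\<^bsub>G\<^esub> h \<otimes>\<^bsub>G\<^esub> \<one>\<^bsub>G\<^esub> \<in> W}"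
    have "openin T Tg" unfolding Tg_def by (rule tg_preimage[OF tg _ _ openW]) (use gc in simp_all)
    moreover have "g \<in> Tg" using gc oneW by (simp add: Tg_def)
    moreover have "Tg \<subseteq> {g \<in> carrier G. vact M g F = F}"
    proof
      fix h assume h: "h \<in> Tg"
      then have hc: "h \<in> carrier G" and wW: "inv\<^bsub>G\<^esub> g \<otimes>\<^bsub>G\<^esub> h \<in> W" using gc by (auto simp: Tg_def)
      have "h = g \<otimes>\<^bsub>G\<^esub> (inv\<^bsub>G\<^esub> g \<otimes>\<^bsub>G\<^esub> h)" using gc hc by (simp add: G.m_assoc[symmetric])
      then have "vact M h F = vact M g (vact M (inv\<^bsub>G\<^esub> g \<otimes>\<^bsub>G\<^esub> h) F)"
        using M.ac_mult[of g "inv\<^bsub>G\<^esub> g \<otimes>\<^bsub>G\<^esub> h" F] gc hc F by simp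
      also have "\<dots> = F" using fixW[OF wW] g by simp
      finally show "h \<in> {g \<in> carrier G. vact M g F = F}" using hc by simp
    qed
    ultimately show "\<exists>T'. openin T T' \<and> g \<in> T' \<and> T' \<subseteq> {g \<in> carrier G. vact M g F = F}" by blast
  qed
qed

lemma smoothM: "smooth_module G T \<sigma> M"
  using skM smM by (simp add: smooth_module_def)


lemma N_simps: "vcarr N = emb ` vcarr P" "vzero N = emb (vzero P)"
  "vadd N a b = emb (vadd P (dec a) (dec b))" "vsmul N c a = emb (vsmul P c (dec a))"
  "vact N g a = emb (vact P g (dec a))"
  by (simp_all add: copyN_def)

lemma skN: "skew_group_module G \<sigma> N"
proof -
  have inv: "\<exists>y\<in>vcarr N. vadd N x y = vzero N" if "x \<in> vcarr N" for x
  proof -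
    from that obtain x0 where x0: "x0 \<in> vcarr P" "x = emb x0" by (auto simp: N_simps)
    obtain y0 where "y0 \<in> vcarr P" "vadd P x0 y0 = vzero P" using P.add_inv[OF x0(1)] by blast
    then show ?thesis using x0 by (intro bexI[of _ "emb y0"]) (auto simp: N_simps)
  qed
  have comm: "vadd N x y = vadd N y x" if "x \<in> vcarr N" "y \<in> vcarr N" for x y
    using that P.add_comm by (auto simp: N_simps)
  show ?thesis
    unfolding skew_group_module_def Let_def
    apply (intro conjI)
    using inv comm
    by (auto simp: N_simps P.zero_in P.add_in P.sm_in P.ac_in P.add_assoc P.add_zero
      P.sm_add P.add_sm P.mult_sm P.one_sm P.ac_add P.ac_sm P.ac_one P.ac_mult)
qed

lemma smoothN: "smooth_module G T \<sigma> N"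
proof -
  have "openin T {g \<in> carrier G. vact N g x = x}" if "x \<in> vcarr N" for x
  proof -
    from that obtain y where y: "y \<in> vcarr P" "x = emb y" by (auto simp: N_simps)
    have "{g \<in> carrier G. vact N g x = x} = {g \<in> carrier G. vact P g y = y}"
      using y by (auto simp: N_simps)
    then show ?thesis using stabP_open y by simp
  qed
  then show ?thesis using skN by (simp add: smooth_module_def)
qed

lemma hom_emb: "skew_hom G P N emb"
  unfolding skew_hom_def by (simp add: N_simps P.add_in P.sm_in P.ac_in)

abbreviation "tt F \<equiv> (\<lambda>p. vsmul P (F p) (fst p))"

lemma tt_in: "p \<in> X \<Longrightarrow> tt F p \<in> vcarr P"
  by (cases p) (auto simp: Xs_def P.sm_in)

lemma fsum_super:
  assumes F: "F \<in> vcarr M" and B: "finite B" "{p. F p \<noteq> 0} \<subseteq> B" "B \<subseteq> X"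
  shows "vsum P (tt F) {p. F p \<noteq> 0} = vsum P (tt F) B"
proof (rule P.vsum_neutral[OF B(1,2)])
  fix i assume "i \<in> B - {p. F p \<noteq> 0}"
  then show "tt F i = vzero P" using B(3) P.zero_sm by (cases i) (auto simp: Xs_def)
next
  fix i assume "i \<in> B" then show "tt F i \<in> vcarr P" using B(3) tt_in by blast
qed

lemma fmap_in: "F \<in> vcarr M \<Longrightarrow> fmap P F \<in> vcarr N"
  unfolding fmap_def N_simps using tt_in by (intro imageI P.vsum_closed) (auto simp: M_simps)

lemma hom_f: "skew_hom G M N (fmap P)"
proof -
  have add: "fmap P (vadd M F F') = vadd N (fmap P F) (fmap P F')"
    if F: "F \<in> vcarr M" and F': "F' \<in> vcarr M" for F F'
  proof -
    let ?B = "{p. F p \<noteq> 0} \<union> {p. F' p \<noteq> 0}"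
    have fB: "finite ?B" and BX: "?B \<subseteq> X" using F F' by (auto simp: M_simps)
    have FF: "vadd M F F' \<in> vcarr M" using M.add_in F F' by simp
    have "vsum P (tt (vadd M F F')) {p. vadd M F F' p \<noteq> 0} = vsum P (tt (vadd M F F')) ?B"
      by (rule fsum_super[OF FF fB _ BX]) (auto simp: M_simps)
    also have "\<dots> = vsum P (\<lambda>p. vadd P (tt F p) (tt F' p)) ?B"
      using BX tt_in by (intro P.vsum_cong) (auto simp: M_simps P.add_sm P.add_in Xs_def)
    also have "\<dots> = vadd P (vsum P (tt F) ?B) (vsum P (tt F') ?B)"
      using BX tt_in by (intro P.vsum_add) auto
    also have "\<dots> = vadd P (vsum P (tt F) {p. F p \<noteq> 0}) (vsum P (tt F') {p. F' p \<noteq> 0})"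
      using fsum_super[OF F fB _ BX] fsum_super[OF F' fB _ BX] by auto
    finally show ?thesis unfolding fmap_def N_simps by simp
  qed
  have smul: "fmap P (vsmul M a F) = vsmul N a (fmap P F)" if F: "F \<in> vcarr M" for F a
  proof -
    let ?B = "{p. F p \<noteq> 0}"
    have fB: "finite ?B" and BX: "?B \<subseteq> X" using F by (auto simp: M_simps)
    have FF: "vsmul M a F \<in> vcarr M" using M.sm_in F by simp
    have "vsum P (tt (vsmul M a F)) {p. vsmul M a F p \<noteq> 0} = vsum P (tt (vsmul M a F)) ?B"
      by (rule fsum_super[OF FF fB _ BX]) (auto simp: M_simps)
    also have "\<dots> = vsum P (\<lambda>p. vsmul P a (tt F p)) ?B"
      using BX tt_in by (intro P.vsum_cong) (auto simp: M_simps P.mult_sm P.sm_in Xs_def)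
    also have "\<dots> = vsmul P a (vsum P (tt F) ?B)"
      using BX tt_in by (intro P.vsum_hom[symmetric]) (auto simp: P.sm_in P.sm_add P.sm_zero)
    finally show ?thesis unfolding fmap_def N_simps by simp
  qed
  have act: "fmap P (vact M g F) = vact N g (fmap P F)" if F: "F \<in> vcarr M" and g: "g \<in> carrier G" for F g
  proof -
    let ?B = "{p. F p \<noteq> 0}"
    have fB: "finite ?B" and BX: "?B \<subseteq> X" using F by (auto simp: M_simps)
    have FF: "vact M g F \<in> vcarr M" using M.ac_in F g by simp
    have inj: "inj_on (actX G P g) ?B"
      by (rule inj_on_inverseI[of _ "actX G P (inv\<^bsub>G\<^esub> g)"]) (use BX actX_inv1 g in auto)
    have B2X: "actX G P g ` ?B \<subseteq> X" using BX X_act g by auto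
    have "vsum P (tt (vact M g F)) {p. vact M g F p \<noteq> 0} = vsum P (tt (vact M g F)) (actX G P g ` ?B)"
      by (rule fsum_super[OF FF _ supp_act[OF g F] B2X]) (use fB in simp)
    also have "\<dots> = vsum P (\<lambda>q. tt (vact M g F) (actX G P g q)) ?B"
      by (rule P.vsum_reindex[OF inj]) (use B2X tt_in in auto)
    also have "\<dots> = vsum P (\<lambda>q. vact P g (tt F q)) ?B"
    proof (rule P.vsum_cong)
      fix q assume q: "q \<in> ?B"
      then have qX: "q \<in> X" using BX by auto
      then have "actX G P g q \<in> X" using X_act g by simp
      then have "tt (vact M g F) (actX G P g q) = vsmul P (\<sigma> g (F q)) (vact P g (fst q))"
        using actX_inv1[OF g qX] by (simp add: M_simps actX_def)
      also have "\<dots> = vact P g (tt F q)" using P.ac_sm g qX by (cases q) (simp add: Xs_def)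
      finally show "tt (vact M g F) (actX G P g q) = vact P g (tt F q)" .
      show "vact P g (tt F q) \<in> vcarr P" using P.ac_in g tt_in qX by simp
    qed
    also have "\<dots> = vact P g (vsum P (tt F) ?B)"
      using BX tt_in by (intro P.vsum_hom[symmetric]) (auto simp: P.ac_in P.ac_add P.ac_zero g)
    finally show ?thesis unfolding fmap_def N_simps by simp
  qed
  show ?thesis unfolding skew_hom_def using fmap_in add smul act by blast
qed

lemma surj_f: "fmap P ` vcarr M = vcarr N"
proof
  show "fmap P ` vcarr M \<subseteq> vcarr N" using fmap_in by blast
  show "vcarr N \<subseteq> fmap P ` vcarr M"
  proof
    fix x assume "x \<in> vcarr N"
    then obtain y where y: "y \<in> vcarr P" "x = emb y" by (auto simp: N_simps)
    define F :: "'v \<times> 'g set \<Rightarrow> 'k" where "F = (\<lambda>p. if p = (y, U') then 1 else 0)"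
    have s: "{p. F p \<noteq> 0} = {(y, U')}" by (auto simp: F_def)
    have "F \<in> vcarr M" using s y U'_Cos by (simp add: M_simps Xs_def)
    moreover have "fmap P F = x"
      unfolding fmap_def s using y P.vsum_single[of "tt F" "(y, U')"] P.one_sm P.sm_in
      by (simp add: F_def)
    ultimately show "x \<in> fmap P ` vcarr M" by blast
  qed
qed

lemma fmap_zero: "fmap P (\<lambda>p. 0) = emb (vzero P)"
  by (simp add: fmap_def)


lemma Us_sub: "subgroup Us G" using P.stab_subgroup[OF v] by simp

lemma finite_transfer:
  assumes "finite (f ` A)" "\<And>a b. a \<in> A \<Longrightarrow> b \<in> A \<Longrightarrow> f a = f b \<Longrightarrow> g a = g b"
  shows "finite (g ` A)"
proof -
  have "g ` A \<subseteq> (\<lambda>c. g (SOME a. a \<in> A \<and> f a = c)) ` (f ` A)"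
  proof
    fix y assume "y \<in> g ` A"
    then obtain a where a: "a \<in> A" "y = g a" by blast
    have "\<exists>a'. a' \<in> A \<and> f a' = f a" using a by blast
    then have "(SOME a'. a' \<in> A \<and> f a' = f a) \<in> A \<and> f (SOME a'. a' \<in> A \<and> f a' = f a) = f a"
      by (rule someI_ex)
    then have "g (SOME a'. a' \<in> A \<and> f a' = f a) = y" using assms(2) a by metis
    then show "y \<in> (\<lambda>c. g (SOME a. a \<in> A \<and> f a = c)) ` (f ` A)" using a by blast
  qed
  then show ?thesis using assms(1) finite_subset by blast
qed

lemma coset_step:
  assumes x: "x \<in> carrier G" and u1: "u1 \<in> Us" and u2: "u2 \<in> Us"
    and eq: "l_coset G u1 (l_coset G x U') = l_coset G u2 (l_coset G x U')"
  shows "l_coset G u2 (conj_set G x U' \<inter> Us) \<subseteq> l_coset G u1 (conj_set G x U' \<inter> Us)"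
proof -
  let ?H = "conj_set G x U' \<inter> Us"
  have u1c: "u1 \<in> carrier G" and u2c: "u2 \<in> carrier G" using u1 u2 by auto
  have e1: "l_coset G (u1 \<otimes>\<^bsub>G\<^esub> x) U' = l_coset G (u2 \<otimes>\<^bsub>G\<^esub> x) U'"
    using eq G.lcos_m_assoc[OF U'c] u1c u2c x by simp
  have "u2 \<otimes>\<^bsub>G\<^esub> x \<in> l_coset G (u2 \<otimes>\<^bsub>G\<^esub> x) U'"
    unfolding l_coset_def using subgroup.one_closed[OF U'sub] u2c x
    by (auto intro!: bexI[of _ "\<one>\<^bsub>G\<^esub>"])
  then obtain k where k: "k \<in> U'" "u2 \<otimes>\<^bsub>G\<^esub> x = u1 \<otimes>\<^bsub>G\<^esub> x \<otimes>\<^bsub>G\<^esub> k"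
    using e1 unfolding l_coset_def by auto
  have kc: "k \<in> carrier G" using k U'c by auto
  let ?h = "inv\<^bsub>G\<^esub> u1 \<otimes>\<^bsub>G\<^esub> u2"
  have hc: "?h \<in> carrier G" using u1c u2c by simp
  have "u2 = u1 \<otimes>\<^bsub>G\<^esub> x \<otimes>\<^bsub>G\<^esub> k \<otimes>\<^bsub>G\<^esub> inv\<^bsub>G\<^esub> x"
    using k(2) u1c u2c x kc by (metis G.inv_solve_right G.m_closed G.inv_closed)
  then have "?h = x \<otimes>\<^bsub>G\<^esub> k \<otimes>\<^bsub>G\<^esub> inv\<^bsub>G\<^esub> x"
    using u1c x kc by (simp add: G.m_assoc[symmetric])
  then have hconj: "?h \<in> conj_set G x U'" unfolding conj_set_def using k(1) by blast
  have hUs: "?h \<in> Us" using subgroup.m_closed[OF Us_sub subgroup.m_inv_closed[OF Us_sub u1] u2] .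
  have cancel: "inv\<^bsub>G\<^esub> x \<otimes>\<^bsub>G\<^esub> (x \<otimes>\<^bsub>G\<^esub> y) = y" if "y \<in> carrier G" for y
    using that x by (simp add: G.m_assoc[symmetric])
  have Hmult: "a \<otimes>\<^bsub>G\<^esub> b \<in> ?H" if a: "a \<in> ?H" and b: "b \<in> ?H" for a b
  proof -
    obtain ua where ua: "ua \<in> U'" "a = x \<otimes>\<^bsub>G\<^esub> ua \<otimes>\<^bsub>G\<^esub> inv\<^bsub>G\<^esub> x" using a unfolding conj_set_def by blast
    obtain ub where ub: "ub \<in> U'" "b = x \<otimes>\<^bsub>G\<^esub> ub \<otimes>\<^bsub>G\<^esub> inv\<^bsub>G\<^esub> x" using b unfolding conj_set_def by blast
    have uac: "ua \<in> carrier G" "ub \<in> carrier G" using ua ub U'c by auto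
    have "a \<otimes>\<^bsub>G\<^esub> b = x \<otimes>\<^bsub>G\<^esub> (ua \<otimes>\<^bsub>G\<^esub> ub) \<otimes>\<^bsub>G\<^esub> inv\<^bsub>G\<^esub> x"
      using ua(2) ub(2) uac x by (simp add: G.m_assoc cancel)
    then have "a \<otimes>\<^bsub>G\<^esub> b \<in> conj_set G x U'" unfolding conj_set_def
      using subgroup.m_closed[OF U'sub ua(1) ub(1)] by blast
    moreover have "a \<otimes>\<^bsub>G\<^esub> b \<in> Us" using subgroup.m_closed[OF Us_sub] a b by blast
    ultimately show ?thesis by blast
  qed
  have u12: "u1 \<otimes>\<^bsub>G\<^esub> ?h = u2" using u1c u2c by (simp add: G.m_assoc[symmetric])
  show ?thesis
  proof
    fix zz assume "zz \<in> l_coset G u2 ?H"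
    then obtain m where m: "m \<in> ?H" "zz = u2 \<otimes>\<^bsub>G\<^esub> m" unfolding l_coset_def by blast
    have mc: "m \<in> carrier G" using m(1) by auto
    have "zz = u1 \<otimes>\<^bsub>G\<^esub> (?h \<otimes>\<^bsub>G\<^esub> m)" using m(2) u12 u1c hc mc by (simp add: G.m_assoc[symmetric])
    moreover have "?h \<otimes>\<^bsub>G\<^esub> m \<in> ?H" using Hmult hconj hUs m(1) by blast
    ultimately show "zz \<in> l_coset G u1 ?H" unfolding l_coset_def by blast
  qed
qed

lemma fixed_zero:
  assumes F: "F \<in> vcarr M" and fx: "\<And>u. u \<in> Us \<Longrightarrow> vact M u F = F"
  shows "F = (\<lambda>p. 0)"
proof (rule ccontr)
  assume "F \<noteq> (\<lambda>p. 0)"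
  have "\<exists>p. F p \<noteq> 0"
  proof (rule ccontr)
    assume "\<not> (\<exists>p. F p \<noteq> 0)"
    then have "F = (\<lambda>p. 0)" by (intro ext) blast
    then show False using \<open>F \<noteq> (\<lambda>p. 0)\<close> by contradiction
  qed
  then obtain p where p: "F p \<noteq> 0" by blast
  then have pX: "p \<in> X" using F by (auto simp: M_simps)
  obtain y C where yC: "p = (y, C)" by (cases p)
  have C: "C \<in> Cos G U'" using pX yC by (simp add: Xs_def)
  obtain x where x: "x \<in> carrier G" "C = l_coset G x U'" using rep[OF C] by blast
  have inS: "actX G P u p \<in> {p. F p \<noteq> 0}" if u: "u \<in> Us" for u
  proof -
    have uc: "u \<in> carrier G" using u by simp
    have "vact M u F (actX G P u p) = \<sigma> u (F p)"
      using X_act[OF uc pX] actX_inv1[OF uc pX] by (simp add: M_simps)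
    then have "F (actX G P u p) = \<sigma> u (F p)" using fx[OF u] by simp
    then show ?thesis using sig_nz[OF uc p] by simp
  qed
  have "(\<lambda>u. l_coset G u C) ` Us \<subseteq> snd ` {p. F p \<noteq> 0}"
  proof
    fix D assume "D \<in> (\<lambda>u. l_coset G u C) ` Us"
    then obtain u where u: "u \<in> Us" "D = l_coset G u C" by blast
    have "snd (actX G P u p) = D" using u yC by (simp add: actX_def)
    then show "D \<in> snd ` {p. F p \<noteq> 0}" using inS[OF u(1)] by force
  qed
  moreover have "finite (snd ` {p. F p \<noteq> 0})" using F by (simp add: M_simps)
  ultimately have fin1: "finite ((\<lambda>u. l_coset G u C) ` Us)" using finite_subset by blast
  have "finite ((\<lambda>u. l_coset G u (conj_set G x U' \<inter> Us)) ` Us)"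
  proof (rule finite_transfer[OF fin1])
    fix a b assume ab: "a \<in> Us" "b \<in> Us" "l_coset G a C = l_coset G b C"
    have "l_coset G b (conj_set G x U' \<inter> Us) \<subseteq> l_coset G a (conj_set G x U' \<inter> Us)"
      by (rule coset_step[OF x(1) ab(1,2)]) (use ab(3) x(2) in simp)
    moreover have "l_coset G a (conj_set G x U' \<inter> Us) \<subseteq> l_coset G b (conj_set G x U' \<inter> Us)"
      by (rule coset_step[OF x(1) ab(2,1)]) (use ab(3) x(2) in simp)
    ultimately show "l_coset G a (conj_set G x U' \<inter> Us) = l_coset G b (conj_set G x U' \<inter> Us)"
      by (rule subset_antisym[rotated])
  qed
  moreover have "infinite {l_coset G u (conj_set G x U' \<inter> Us) | u. u \<in> Us}"
    using infi x(1) by (simp add: infinite_index_def)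
  moreover have "{l_coset G u (conj_set G x U' \<inter> Us) | u. u \<in> Us} = (\<lambda>u. l_coset G u (conj_set G x U' \<inter> Us)) ` Us"
    by blast
  ultimately show False by simp
qed

end

theorem lemma3p4:
  fixes G :: "'g monoid" and T :: "'g topology" and \<sigma> :: "'g \<Rightarrow> 'k::field \<Rightarrow> 'k"
    and P :: "('k, 'g, 'v) skew_module"
  assumes "permutation_group G T"
    and "field_action G \<sigma>"
    and "\<forall>U. open_subgroup G T U \<longrightarrow>
           (\<exists>U'. open_subgroup G T U' \<and> U' \<subseteq> U \<and>
                 (\<forall>g\<in>carrier G. infinite_index G (conj_set G g U' \<inter> U) U))"
    and "smooth_module G T \<sigma> P"
    and "vcarr P \<noteq> {vzero P}"
  shows "\<not> sm_projective G T \<sigma> P"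
proof
  assume proj: "sm_projective G T \<sigma> P"
  have tg: "topological_group G T" using assms(1) by (simp add: permutation_group_def)
  have grp: "group G" using tg by (simp add: topological_group_def)
  have skP: "skew_group_module G \<sigma> P" using assms(4) by (simp add: smooth_module_def)
  interpret P: skm G \<sigma> P by (rule skm.intro[OF grp assms(2) skP])
  obtain v where v: "v \<in> vcarr P" "v \<noteq> vzero P" using assms(5) P.zero_in by blast
  let ?U = "{g \<in> carrier G. vact P g v = v}"
  have "open_subgroup G T ?U"
    using P.stab_subgroup[OF v(1)] assms(4) v(1) by (simp add: open_subgroup_def smooth_module_def)
  then obtain U' where U': "open_subgroup G T U'" "U' \<subseteq> ?U"
    "\<forall>g\<in>carrier G. infinite_index G (conj_set G g U' \<inter> ?U) ?U"
    using assms(3) by blast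
  interpret C: constr G T \<sigma> P v U'
  proof (rule constr.intro)
    show "subgroup U' G" "openin T U'" using U'(1) by (simp_all add: open_subgroup_def)
  qed (use tg assms(2,4) v U' in simp_all)
  obtain l where l: "skew_hom G P (freeM G \<sigma> P U') l" "\<forall>x\<in>vcarr P. fmap P (l x) = emb x"
    using proj[unfolded sm_projective_in_def, rule_format, of "freeM G \<sigma> P U'" "copyN P" "fmap P" emb]
      C.smoothM C.smoothN C.hom_f C.surj_f C.hom_emb by blast
  have lv: "l v \<in> vcarr (freeM G \<sigma> P U')" using l(1) v(1) by (simp add: skew_hom_def)
  have "vact (freeM G \<sigma> P U') u (l v) = l v" if "u \<in> ?U" for u
  proof -
    have "l (vact P u v) = vact (freeM G \<sigma> P U') u (l v)"
      using l(1) v(1) that unfolding skew_hom_def by blast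
    then show ?thesis using that by simp
  qed
  then have "l v = (\<lambda>p. 0)" using C.fixed_zero[OF lv] by blast
  then have "emb v = (emb (vzero P) :: 'v \<times> 'g set \<Rightarrow> 'k)" using l(2) v(1) C.fmap_zero by metis
  then show False using v(2) by simp
qed

end
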